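(* There does not exist an $S(3,K_4^{(3)}+e,v)$ for $v=5$ or $v=6$.
   Context: $K_4^{(3)}+e$ denotes the 3-uniform hypergraph with vertex set $\{1,2,3,4,5\}$ and edge set $\{\{1,2,3\},\{1,2,4\},\{1,3,4\},\{2,3,4\},\{3,4,5\}\}$. An $S(3,K_4^{(3)}+e,v)$ is a collection of 3-uniform hypergraphs (blocks) on subsets of a $v$-set $X$, each isomorphic to $K_4^{(3)}+e$, whose edge sets partition the set of all 3-subsets of $X$. *)

theory Defs
  imports Main
begin

definition K4e_edges :: "nat set set" where
  "K4e_edges = {{1,2,3},{1,2,4},{1,3,4},{2,3,4},{3,4,5}}"

text \<open>Since K_4^(3)+e has no isolated vertices, a block is determined by its
  edge set, which is the image of the edges of K_4^(3)+e under an injection of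
  {1,...,5} into X.\<close>
definition is_K4e_block :: "'a set \<Rightarrow> 'a set set \<Rightarrow> bool" where
  "is_K4e_block X E \<longleftrightarrow>
     (\<exists>f. inj_on f {1..5} \<and> f ` {1..5} \<subseteq> X \<and> E = (\<lambda>e. f ` e) ` K4e_edges)"

definition is_S3_K4e :: "'a set \<Rightarrow> 'a set set set \<Rightarrow> bool" where
  "is_S3_K4e X D \<longleftrightarrow>
     (\<forall>E\<in>D. is_K4e_block X E) \<and>
     (\<forall>T. T \<subseteq> X \<and> card T = 3 \<longrightarrow> (\<exists>!E. E \<in> D \<and> T \<in> E))"

end

theory Submission imports Defs begin

lemma sub4: "S \<subseteq> {1,2,3,4::nat} \<Longrightarrow> card S = 3 \<Longrightarrow> S \<in> K4e_edges"
proof -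
  assume a: "S \<subseteq> {1,2,3,4::nat}" "card S = 3"
  have "S \<noteq> {1,2,3,4}" using a(2) by auto
  then obtain x where x: "x \<in> {1,2,3,4::nat}" "x \<notin> S" using a(1) by blast
  have sub: "S \<subseteq> {1,2,3,4} - {x}" using a x by blast
  have c: "card ({1,2,3,4::nat} - {x}) = 3" using x by auto
  have "S = {1,2,3,4} - {x}" using card_subset_eq[OF _ sub] c a(2) by simp
  moreover have "x = 1 \<or> x = 2 \<or> x = 3 \<or> x = 4" using x by simp
  moreover have "{1,2,3,4::nat} - {1} = {2,3,4}" "{1,2,3,4::nat} - {2} = {1,3,4}"
    "{1,2,3,4::nat} - {3} = {1,2,4}" "{1,2,3,4::nat} - {4} = {1,2,3}" by auto
  ultimately show ?thesis unfolding K4e_edges_def by fastforce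
qed

lemma block_props:
  assumes "is_K4e_block X E"
  shows "\<exists>K. K \<subseteq> X \<and> card K = 4 \<and> (\<forall>T. T \<subseteq> K \<and> card T = 3 \<longrightarrow> T \<in> E) \<and> card E \<le> 5 \<and> E \<subseteq> Pow X"
proof -
  obtain f where f: "inj_on f {1..5}" "f ` {1..5} \<subseteq> X" "E = (\<lambda>e. f ` e) ` K4e_edges"
    using assms unfolding is_K4e_block_def by blast
  have s4: "{1,2,3,4::nat} \<subseteq> {1..5}" by auto
  have i4: "inj_on f {1,2,3,4}" using inj_on_subset[OF f(1) s4] .
  define K where "K = f ` {1,2,3,4}"
  have "K \<subseteq> X" using f(2) s4 K_def by blast
  moreover have "card K = 4" unfolding K_def using card_image[OF i4] by simp
  moreover have "\<forall>T. T \<subseteq> K \<and> card T = 3 \<longrightarrow> T \<in> E"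
  proof (intro allI impI)
    fix T assume T: "T \<subseteq> K \<and> card T = 3"
    define S where "S = {x\<in>{1,2,3,4::nat}. f x \<in> T}"
    have TS: "T = f ` S" using T unfolding S_def K_def by blast
    have Ss: "S \<subseteq> {1,2,3,4}" unfolding S_def by blast
    have "card (f ` S) = card S" using card_image[OF inj_on_subset[OF i4 Ss]] .
    then have "card S = 3" using TS T by simp
    then have "S \<in> K4e_edges" using sub4[OF Ss] by blast
    then show "T \<in> E" using f(3) TS by auto
  qed
  moreover have "card E \<le> 5"
  proof -
    have fin: "finite K4e_edges" unfolding K4e_edges_def by blast
    have "card E \<le> card K4e_edges" using f(3) card_image_le[OF fin] by simp
    also have "\<dots> \<le> 5"
    proof -
      have "K4e_edges = set [{1,2,3},{1,2,4},{1,3,4},{2,3,4},{3,4,5}]" by (simp add: K4e_edges_def)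
      then show ?thesis using card_length[of "[{1,2,3},{1,2,4},{1,3,4},{2,3,4},{3,4,5::nat}]"] by simp
    qed
    finally show ?thesis .
  qed
  moreover have "E \<subseteq> Pow X"
  proof -
    have "\<forall>e\<in>K4e_edges. e \<subseteq> {1..5}" by (simp add: K4e_edges_def)
    then show ?thesis using f(2,3) by blast
  qed
  ultimately show ?thesis by blast
qed

theorem lemma4p1:
  fixes X :: "'a set" and D :: "'a set set set"
  assumes "finite X" and "card X = 5 \<or> card X = 6"
  shows "\<not> is_S3_K4e X D"
proof
  assume S: "is_S3_K4e X D"
  have blk: "\<forall>E\<in>D. is_K4e_block X E" using S unfolding is_S3_K4e_def by blast
  have cov: "\<And>T. T \<subseteq> X \<Longrightarrow> card T = 3 \<Longrightarrow> \<exists>!E. E \<in> D \<and> T \<in> E"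
    using S unfolding is_S3_K4e_def by blast
  obtain K where K: "\<forall>E\<in>D. K E \<subseteq> X \<and> card (K E) = 4 \<and>
      (\<forall>T. T \<subseteq> K E \<and> card T = 3 \<longrightarrow> T \<in> E) \<and> card E \<le> 5 \<and> E \<subseteq> Pow X"
  proof -
    have "\<forall>E\<in>D. \<exists>K. K \<subseteq> X \<and> card K = 4 \<and>
      (\<forall>T. T \<subseteq> K \<and> card T = 3 \<longrightarrow> T \<in> E) \<and> card E \<le> 5 \<and> E \<subseteq> Pow X"
      using block_props blk by blast
    then obtain g where "\<forall>E\<in>D. g E \<subseteq> X \<and> card (g E) = 4 \<and>
      (\<forall>T. T \<subseteq> g E \<and> card T = 3 \<longrightarrow> T \<in> E) \<and> card E \<le> 5 \<and> E \<subseteq> Pow X"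
      by (metis bchoice)
    then show ?thesis using that by blast
  qed
  have finD: "finite D"
  proof (rule finite_subset)
    show "D \<subseteq> Pow (Pow X)" using K by blast
    show "finite (Pow (Pow X))" using assms(1) by simp
  qed
  have finU: "finite (\<Union>D)"
    by (rule finite_subset[of _ "Pow X"]) (use K assms(1) in auto)
  define Tr where "Tr = {T. T \<subseteq> X \<and> card T = 3}"
  have "Tr \<subseteq> \<Union>D" unfolding Tr_def using cov by blast
  then have cTr: "card Tr \<le> card (\<Union>D)" using finU card_mono by blast
  have "card (\<Union>D) \<le> sum card D" by (rule card_Union_le_sum_card)
  also have "\<dots> \<le> card D * 5" using sum_bounded_above[of D card 5] K by simp
  finally have cU: "card (\<Union>D) \<le> card D * 5" .
  have trc: "card Tr = card X choose 3" unfolding Tr_def using n_subsets[OF assms(1)] .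
  have inter: "card (K E1 \<inter> K E2) \<le> 2" if "E1 \<in> D" "E2 \<in> D" "E1 \<noteq> E2" for E1 E2
  proof (rule ccontr)
    assume "\<not> ?thesis"
    then have "3 \<le> card (K E1 \<inter> K E2)" by simp
    then obtain T where T: "T \<subseteq> K E1 \<inter> K E2" "card T = 3"
      using obtain_subset_with_card_n by metis
    have k1: "\<forall>T. T \<subseteq> K E1 \<and> card T = 3 \<longrightarrow> T \<in> E1" using K that(1) by blast
    have k2: "\<forall>T. T \<subseteq> K E2 \<and> card T = 3 \<longrightarrow> T \<in> E2" using K that(2) by blast
    have i1: "T \<in> E1" using k1 T by blast
    have i2: "T \<in> E2" using k2 T by blast
    have "K E1 \<subseteq> X" using K that(1) by blast
    then have "T \<subseteq> X" using T by blast
    then have "\<exists>!E. E \<in> D \<and> T \<in> E" using cov T(2) by blast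
    then show False using i1 i2 that by blast
  qed
  have un: "card (K E1 \<union> K E2) \<ge> 6" if "E1 \<in> D" "E2 \<in> D" "E1 \<noteq> E2" for E1 E2
  proof -
    have f: "finite (K E1)" "finite (K E2)" using K that assms(1) finite_subset by metis+
    have "card (K E1) + card (K E2) = card (K E1 \<union> K E2) + card (K E1 \<inter> K E2)"
      using card_Un_Int[OF f] .
    then show ?thesis using inter[OF that] K that by simp
  qed
  have unsub: "K E1 \<union> K E2 \<subseteq> X" if "E1 \<in> D" "E2 \<in> D" for E1 E2 using K that by blast
  from assms(2) show False
  proof
    assume c5: "card X = 5"
    have "\<forall>E1\<in>D. \<forall>E2\<in>D. E1 = E2"
    proof (intro ballI, rule ccontr)
      fix E1 E2 assume h: "E1 \<in> D" "E2 \<in> D" "E1 \<noteq> E2"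
      have "card (K E1 \<union> K E2) \<le> card X" using card_mono[OF assms(1) unsub[OF h(1,2)]] .
      then show False using un[OF h] c5 by simp
    qed
    then have "card D \<le> 1" using card_le_Suc0_iff_eq[OF finD] by simp
    moreover have "card Tr = 10" using trc c5 by (simp add: numeral_eq_Suc)
    ultimately show False using cTr cU by linarith
  next
    assume c6: "card X = 6"
    define C where "C E = X - K E" for E
    have cC: "card (C E) = 2" if "E \<in> D" for E
      using card_Diff_subset[of "K E" X] K that c6 assms(1) finite_subset unfolding C_def by fastforce
    have KC: "K E = X - C E" if "E \<in> D" for E using K that unfolding C_def by blast
    have disj: "C E1 \<inter> C E2 = {}" if "E1 \<in> D" "E2 \<in> D" "E1 \<noteq> E2" for E1 E2
    proof -
      have "K E1 \<union> K E2 = X"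
        using card_subset_eq[OF assms(1) unsub[OF that(1,2)]] un[OF that] c6
          card_mono[OF assms(1) unsub[OF that(1,2)]] by simp
      then show ?thesis unfolding C_def by blast
    qed
    have injC: "inj_on C D"
    proof
      fix E1 E2 assume h: "E1 \<in> D" "E2 \<in> D" "C E1 = C E2"
      show "E1 = E2"
      proof (rule ccontr)
        assume "E1 \<noteq> E2"
        then have "C E1 \<inter> C E2 = {}" using disj h by blast
        then have "C E1 = {}" using h(3) by simp
        then show False using cC[OF h(1)] by simp
      qed
    qed
    have pw: "pairwise disjnt (C ` D)"
      unfolding pairwise_def disjnt_def using disj by blast
    have "card (\<Union>(C ` D)) = sum card (C ` D)"
      by (rule card_Union_disjoint[OF pw]) (use assms(1) C_def in auto)
    also have "\<dots> = sum (card \<circ> C) D" using sum.reindex[OF injC] by simp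
    also have "\<dots> = sum (\<lambda>_. 2) D" using cC by (intro sum.cong) auto
    also have "\<dots> = 2 * card D" by simp
    finally have e: "card (\<Union>(C ` D)) = 2 * card D" .
    have "\<Union>(C ` D) \<subseteq> X" unfolding C_def by blast
    then have "card (\<Union>(C ` D)) \<le> 6" using card_mono[OF assms(1)] c6 by metis
    then have "card D \<le> 3" using e by simp
    moreover have "card Tr = 20" using trc c6 by (simp add: numeral_eq_Suc)
    ultimately show False using cTr cU by linarith
  qed
qed
end
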